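(* Let $X$ be a $k$-regular distance regular graph of diameter $d$, let $Y=\mathrm{LD}(X)$, and let $Y_i$ be the $i$-th distance digraph of $Y$. Let $\lambda$ be an eigenvalue of $A(X)$ with $\lambda\neq\pm k$, let $E_\lambda$ be the orthogonal projection onto the $\lambda$-eigenspace of $A(X)$, and set $S_\lambda := D_t^TE_\lambda D_h - D_h^TE_\lambda D_t$. Then \[S_\lambda\in\mathrm{span}\{S(Y_1),S(Y_2),\dots,S(Y_d)\}.\]
   Context: $X$ is a connected distance regular graph (for vertices $u,v$ at distance $\ell$, the number of vertices at distance $i$ from $u$ and $j$ from $v$ depends only on $i,j,\ell$). Each edge $\{a,b\}$ of $X$ is replaced by arcs $(a,b)$ and $(b,a)$; the line digraph $\mathrm{LD}(X)$ has the arcs as vertices, with an arc from $(a,b)$ to $(c,d)$ iff $b=c$. For a digraph $Y$, its $i$-th distance digraph $Y_i$ has the same vertex set, with $a$ adjacent to $b$ iff the directed distance from $a$ to $b$ in $Y$ is $i$. For a digraph $Z$ with $01$-adjacency matrix $A(Z)$, its skew-adjacency matrix is $S(Z)=A(Z)-A(Z)^T$. $D_t$ and $D_h$ have rows indexed by vertices and columns by arcs: $(D_t)_{u,(a,b)}=1$ iff $u=a$, $(D_h)_{u,(a,b)}=1$ iff $u=b$, and $0$ otherwise. *)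

theory Defs
  imports Complex_Main
begin

definition reach :: "('a \<Rightarrow> 'a \<Rightarrow> bool) \<Rightarrow> 'a \<Rightarrow> 'a \<Rightarrow> bool" where
  "reach R x y \<longleftrightarrow> (\<exists>n. (R ^^ n) x y)"

text \<open>(Directed) distance: least length of a walk; meaningful only if reachable.\<close>
definition ddist :: "('a \<Rightarrow> 'a \<Rightarrow> bool) \<Rightarrow> 'a \<Rightarrow> 'a \<Rightarrow> nat" where
  "ddist R x y = (LEAST n. (R ^^ n) x y)"

definition simple_graph :: "('v \<Rightarrow> 'v \<Rightarrow> bool) \<Rightarrow> bool" where
  "simple_graph E \<longleftrightarrow> (\<forall>u v. E u v \<longleftrightarrow> E v u) \<and> (\<forall>u. \<not> E u u)"

definition connected_graph :: "('v \<Rightarrow> 'v \<Rightarrow> bool) \<Rightarrow> bool" where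
  "connected_graph E \<longleftrightarrow> (\<forall>u v. reach E u v)"

definition regular_graph :: "('v::finite \<Rightarrow> 'v \<Rightarrow> bool) \<Rightarrow> nat \<Rightarrow> bool" where
  "regular_graph E k \<longleftrightarrow> (\<forall>v. card {w. E v w} = k)"

definition distance_regular :: "('v::finite \<Rightarrow> 'v \<Rightarrow> bool) \<Rightarrow> bool" where
  "distance_regular E \<longleftrightarrow> (\<exists>p :: nat \<Rightarrow> nat \<Rightarrow> nat \<Rightarrow> nat.
     \<forall>u v i j. card {w. ddist E u w = i \<and> ddist E v w = j} = p i j (ddist E u v))"

definition diameter :: "('v::finite \<Rightarrow> 'v \<Rightarrow> bool) \<Rightarrow> nat" where
  "diameter E = Max {ddist E u v | u v. True}"

definition adj_mat :: "('v \<Rightarrow> 'v \<Rightarrow> bool) \<Rightarrow> 'v \<Rightarrow> 'v \<Rightarrow> real" where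
  "adj_mat E u w = (if E u w then 1 else 0)"

definition eigenspace :: "('v::finite \<Rightarrow> 'v \<Rightarrow> real) \<Rightarrow> real \<Rightarrow> ('v \<Rightarrow> real) set" where
  "eigenspace A mu = {f. \<forall>u. (\<Sum>w\<in>UNIV. A u w * f w) = mu * f u}"

definition is_eigenvalue :: "('v::finite \<Rightarrow> 'v \<Rightarrow> real) \<Rightarrow> real \<Rightarrow> bool" where
  "is_eigenvalue A mu \<longleftrightarrow> (\<exists>f \<in> eigenspace A mu. f \<noteq> (\<lambda>_. 0))"

definition orth_proj_mat :: "('v::finite \<Rightarrow> 'v \<Rightarrow> real) \<Rightarrow> ('v \<Rightarrow> real) set \<Rightarrow> bool" where
  "orth_proj_mat P W \<longleftrightarrow> (\<forall>f. (\<lambda>u. \<Sum>w\<in>UNIV. P u w * f w) \<in> W \<and>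
      (\<forall>g\<in>W. (\<Sum>u\<in>UNIV. (f u - (\<Sum>w\<in>UNIV. P u w * f w)) * g u) = 0))"

definition arcs :: "('v \<Rightarrow> 'v \<Rightarrow> bool) \<Rightarrow> ('v \<times> 'v) set" where
  "arcs E = {(a,b). E a b}"

definition LD :: "('v \<Rightarrow> 'v \<Rightarrow> bool) \<Rightarrow> 'v \<times> 'v \<Rightarrow> 'v \<times> 'v \<Rightarrow> bool" where
  "LD E x y \<longleftrightarrow> x \<in> arcs E \<and> y \<in> arcs E \<and> snd x = fst y"

definition dist_digraph :: "('a \<Rightarrow> 'a \<Rightarrow> bool) \<Rightarrow> nat \<Rightarrow> 'a \<Rightarrow> 'a \<Rightarrow> bool" where
  "dist_digraph R i x y \<longleftrightarrow> reach R x y \<and> ddist R x y = i"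

definition adj01 :: "('a \<Rightarrow> 'a \<Rightarrow> bool) \<Rightarrow> 'a \<Rightarrow> 'a \<Rightarrow> real" where
  "adj01 R x y = (if R x y then 1 else 0)"

definition mtrans :: "('a \<Rightarrow> 'b \<Rightarrow> real) \<Rightarrow> 'b \<Rightarrow> 'a \<Rightarrow> real" where
  "mtrans M i j = M j i"

definition skew_adj :: "('a \<Rightarrow> 'a \<Rightarrow> bool) \<Rightarrow> 'a \<Rightarrow> 'a \<Rightarrow> real" where
  "skew_adj R x y = adj01 R x y - mtrans (adj01 R) x y"

definition mmult :: "'k set \<Rightarrow> ('a \<Rightarrow> 'k \<Rightarrow> real) \<Rightarrow> ('k \<Rightarrow> 'b \<Rightarrow> real) \<Rightarrow> 'a \<Rightarrow> 'b \<Rightarrow> real" where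
  "mmult K M N i j = (\<Sum>k\<in>K. M i k * N k j)"

definition Dt :: "'v \<Rightarrow> 'v \<times> 'v \<Rightarrow> real" where
  "Dt u x = (if u = fst x then 1 else 0)"

definition Dh :: "'v \<Rightarrow> 'v \<times> 'v \<Rightarrow> real" where
  "Dh u x = (if u = snd x then 1 else 0)"

definition S_lam :: "('v::finite \<Rightarrow> 'v \<Rightarrow> real) \<Rightarrow> 'v \<times> 'v \<Rightarrow> 'v \<times> 'v \<Rightarrow> real" where
  "S_lam P x y = mmult UNIV (mmult UNIV (mtrans Dt) P) Dh x y
               - mmult UNIV (mmult UNIV (mtrans Dh) P) Dt x y"

end

theory Submission
  imports Defs "HOL-Analysis.Linear_Algebra" "HOL-Analysis.Finite_Cartesian_Product" "HOL-Computational_Algebra.Polynomial"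
begin


definition mv :: "('v::finite \<Rightarrow> 'v \<Rightarrow> real) \<Rightarrow> ('v \<Rightarrow> real) \<Rightarrow> 'v \<Rightarrow> real" where
  "mv A f = (\<lambda>u. \<Sum>w\<in>UNIV. A u w * f w)"

definition apow :: "('v::finite \<Rightarrow> 'v \<Rightarrow> real) \<Rightarrow> nat \<Rightarrow> ('v \<Rightarrow> real) \<Rightarrow> 'v \<Rightarrow> real" where
  "apow A i = (mv A ^^ i)"

definition opv :: "('v::finite \<Rightarrow> 'v \<Rightarrow> real) \<Rightarrow> real poly \<Rightarrow> ('v \<Rightarrow> real) \<Rightarrow> 'v \<Rightarrow> real" where
  "opv A p f = (\<lambda>u. \<Sum>i\<le>degree p. coeff p i * apow A i f u)"

definition ev :: "'v \<Rightarrow> 'v \<Rightarrow> real" where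
  "ev w = (\<lambda>u. if u = w then 1 else 0)"

definition inn :: "('v::finite \<Rightarrow> real) \<Rightarrow> ('v \<Rightarrow> real) \<Rightarrow> real" where
  "inn f g = (\<Sum>u\<in>UNIV. f u * g u)"

lemma mv_sum: "mv A (\<lambda>z. \<Sum>i\<in>I. g i z) u = (\<Sum>i\<in>I. mv A (g i) u)"
  unfolding mv_def by (simp add: sum_distrib_left sum.swap[of _ I])

lemma mv_scale: "mv A (\<lambda>z. c * g z) u = c * mv A g u"
  unfolding mv_def by (simp add: sum_distrib_left algebra_simps)

lemma apow_0[simp]: "apow A 0 f = f" by (simp add: apow_def)
lemma apow_Suc: "apow A (Suc i) f = mv A (apow A i f)" by (simp add: apow_def)

lemma opv_bound:
  assumes "degree p < n"
  shows "opv A p f u = (\<Sum>i<n. coeff p i * apow A i f u)"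
proof -
  have "(\<Sum>i<n. coeff p i * apow A i f u) = (\<Sum>i\<le>degree p. coeff p i * apow A i f u)"
    by (rule sum.mono_neutral_right) (use assms in \<open>auto simp: coeff_eq_0\<close>)
  then show ?thesis by (simp add: opv_def)
qed

lemma opv_add: "opv A (p + q) f u = opv A p f u + opv A q f u"
proof -
  define n where "n = Suc (degree p + degree q)"
  have "degree (p+q) < n" using degree_add_le_max[of p q] unfolding n_def by linarith
  then have "opv A (p + q) f u = (\<Sum>i<n. coeff (p+q) i * apow A i f u)" by (rule opv_bound)
  also have "\<dots> = (\<Sum>i<n. coeff p i * apow A i f u) + (\<Sum>i<n. coeff q i * apow A i f u)"
    by (simp add: algebra_simps sum.distrib)
  also have "\<dots> = opv A p f u + opv A q f u"
    using opv_bound[of p n A f u] opv_bound[of q n A f u] by (simp add: n_def)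
  finally show ?thesis .
qed

lemma opv_smult: "opv A (smult a p) f u = a * opv A p f u"
proof -
  have "opv A (smult a p) f u = (\<Sum>i<Suc (degree p). coeff (smult a p) i * apow A i f u)"
    by (rule opv_bound) (use degree_smult_le[of a p] in linarith)
  also have "\<dots> = a * (\<Sum>i<Suc (degree p). coeff p i * apow A i f u)"
    by (simp only: coeff_smult sum_distrib_left mult.assoc)
  also have "\<dots> = a * opv A p f u" by (simp only: opv_bound[of p "Suc (degree p)", symmetric] lessI)
  finally show ?thesis .
qed

lemma opv_pCons: "opv A (pCons a p) f u = a * f u + mv A (opv A p f) u"
proof -
  define n where "n = Suc (degree p)"
  have "opv A (pCons a p) f u = (\<Sum>i<Suc n. coeff (pCons a p) i * apow A i f u)"
    by (rule opv_bound) (simp add: n_def degree_pCons_le le_imp_less_Suc)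
  also have "\<dots> = a * f u + (\<Sum>i<n. coeff p i * mv A (apow A i f) u)"
    by (simp only: sum.lessThan_Suc_shift) (simp add: apow_Suc)
  also have "(\<Sum>i<n. coeff p i * mv A (apow A i f) u) = mv A (\<lambda>z. \<Sum>i<n. coeff p i * apow A i f z) u"
    by (simp add: mv_sum mv_scale)
  also have "(\<lambda>z. \<Sum>i<n. coeff p i * apow A i f z) = opv A p f"
    by (rule ext, rule opv_bound[symmetric]) (simp add: n_def)
  finally show ?thesis .
qed

lemma opv_0[simp]: "opv A 0 f u = 0" by (simp add: opv_def)

lemma opv_const: "opv A [:c:] f u = c * f u"
  by (simp add: opv_def)

lemma opv_mult: "opv A (p * q) f = opv A p (opv A q f)"
proof (induction p rule: pCons_induct)
  case 0
  then show ?case by (simp add: fun_eq_iff)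
next
  case (pCons a p)
  show ?case
  proof
    fix u
    have "opv A (pCons a p * q) f u = opv A (smult a q + pCons 0 (p * q)) f u" by simp
    also have "\<dots> = a * opv A q f u + mv A (opv A (p*q) f) u"
      by (simp add: opv_add opv_smult opv_pCons)
    also have "\<dots> = opv A (pCons a p) (opv A q f) u"
      by (simp add: opv_pCons pCons.IH)
    finally show "opv A (pCons a p * q) f u = opv A (pCons a p) (opv A q f) u" .
  qed
qed

lemma apow_expand: "apow A i f u = (\<Sum>w\<in>UNIV. apow A i (ev w) u * f w)"
proof (induction i arbitrary: u)
  case 0
  have "(\<Sum>w\<in>UNIV. ev w u * f w) = (\<Sum>w\<in>UNIV. if u = w then f w else 0)"
    by (rule sum.cong) (auto simp: ev_def)
  then show ?case by simp
next
  case (Suc i)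
  have "apow A (Suc i) f u = mv A (\<lambda>z. \<Sum>w\<in>UNIV. apow A i (ev w) z * f w) u"
    by (simp add: apow_Suc Suc.IH[symmetric])
  also have "\<dots> = (\<Sum>w\<in>UNIV. mv A (apow A i (ev w)) u * f w)"
    by (simp add: mv_sum mv_scale mult.commute)
  finally show ?case by (simp add: apow_Suc)
qed

lemma opv_expand: "opv A p f u = (\<Sum>w\<in>UNIV. opv A p (ev w) u * f w)"
  unfolding opv_def
  by (subst apow_expand) (simp add: sum_distrib_left sum_distrib_right sum.swap[of _ UNIV] mult.assoc)

lemma opv_zero_fun: "opv A p (\<lambda>_. 0) u = 0"
  by (subst opv_expand) simp

lemma opv_lin: "opv A p (\<lambda>z. a * f z + b * g z) u = a * opv A p f u + b * opv A p g u"
  by (subst (1 2 3) opv_expand) (simp add: algebra_simps sum.distrib sum_distrib_left)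

lemma opv_monom: "opv A (monom c i) f u = c * apow A i f u"
proof -
  have "opv A (monom c i) f u = (\<Sum>j<Suc i. coeff (monom c i) j * apow A j f u)"
    by (rule opv_bound) (simp add: degree_monom_le le_imp_less_Suc)
  also have "\<dots> = (\<Sum>j<Suc i. if j = i then c * apow A i f u else 0)"
    by (rule sum.cong) (auto simp: coeff_monom)
  finally show ?thesis by simp
qed

lemma opv_sum: "finite I \<Longrightarrow> opv A (\<Sum>i\<in>I. p i) f u = (\<Sum>i\<in>I. opv A (p i) f u)"
  by (induction I rule: finite_induct) (simp_all add: opv_add)

lemma opv_diff: "opv A (p - q) f u = opv A p f u - opv A q f u"
  using opv_add[of A "p - q" q f u] by simp

lemma annihilating:
  fixes A :: "'v::finite \<Rightarrow> 'v \<Rightarrow> real"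
  shows "\<exists>m. m \<noteq> 0 \<and> (\<forall>f u. opv A m f u = 0)"
proof -
  define N where "N = CARD('v \<times> 'v)"
  define vecs :: "nat \<Rightarrow> real^('v \<times> 'v)" where
    "vecs i = (\<chi> x. apow A i (ev (snd x)) (fst x))" for i
  have ext0: "\<forall>f u. opv A m f u = 0" if "\<forall>w u. opv A m (ev w) u = 0" for m
    using that by (subst opv_expand) simp
  show ?thesis
  proof (cases "inj_on vecs {..N}")
    case False
    then obtain i j where ij: "i \<noteq> j" "vecs i = vecs j"
      unfolding inj_on_def by blast
    define m where "m = monom (1::real) i - monom 1 j"
    have "m \<noteq> 0"
    proof
      assume "m = 0"
      then have "coeff m i = 0" by simp
      then show False using ij(1) by (simp add: m_def coeff_monom)
    qed
    moreover have "\<forall>w u. opv A m (ev w) u = 0"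
    proof (intro allI)
      fix w u
      have "vecs i $ (u, w) = vecs j $ (u, w)" using ij by simp
      then show "opv A m (ev w) u = 0"
        by (simp add: m_def opv_diff opv_monom vecs_def)
    qed
    ultimately show ?thesis using ext0 by blast
  next
    case True
    define S where "S = vecs ` {..N}"
    have cardS: "card S = Suc N" using True by (simp add: S_def card_image)
    have "dependent S"
      by (rule dependent_biggerset) (simp add: cardS N_def)
    then obtain c where c: "\<exists>v\<in>S. c v \<noteq> 0" "(\<Sum>v\<in>S. c v *\<^sub>R v) = 0"
      using dependent_finite[of S] by (auto simp: S_def)
    define m where "m = (\<Sum>i\<le>N. monom (c (vecs i)) i)"
    have coeffm: "coeff m i = c (vecs i)" if "i \<le> N" for i
      using that by (simp add: m_def coeff_sum coeff_monom)
    have "m \<noteq> 0"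
    proof
      assume "m = 0"
      from c(1) obtain i where "i \<le> N" "c (vecs i) \<noteq> 0" by (auto simp: S_def)
      with coeffm[of i] \<open>m = 0\<close> show False by simp
    qed
    moreover have "\<forall>w u. opv A m (ev w) u = 0"
    proof (intro allI)
      fix w u
      have "(\<Sum>i\<le>N. c (vecs i) *\<^sub>R vecs i) = 0"
        using c(2) True by (simp add: S_def sum.reindex)
      then have "(\<Sum>i\<le>N. c (vecs i) *\<^sub>R vecs i) $ (u, w) = 0" by simp
      then show "opv A m (ev w) u = 0"
        by (simp add: m_def opv_sum opv_monom vecs_def)
    qed
    ultimately show ?thesis using ext0 by blast
  qed
qed

definition Tm :: "('v::finite \<Rightarrow> 'v \<Rightarrow> real) \<Rightarrow> real \<Rightarrow> ('v \<Rightarrow> real) \<Rightarrow> 'v \<Rightarrow> real" where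
  "Tm A mu f = (\<lambda>u. mv A f u - mu * f u)"

lemma opv_one[simp]: "opv A 1 f = f"
  by (rule ext) (simp add: opv_def)

lemma opv_one'[simp]: "opv A [:1:] f = f"
  by (rule ext) (simp add: opv_def)

lemma opv_lin1: "opv A [:-mu, 1:] f = Tm A mu f"
  by (rule ext) (simp add: opv_pCons Tm_def)

lemma opv_pow: "opv A ([:-mu, 1:] ^ r) f = (Tm A mu ^^ r) f"
proof (induction r arbitrary: f)
  case 0
  then show ?case by simp
next
  case (Suc r)
  have "[:-mu, 1:] ^ Suc r = [:-mu, 1:] ^ r * [:-mu, 1:]" by (simp only: power_Suc2)
  then have "opv A ([:-mu, 1:] ^ Suc r) f = (Tm A mu ^^ r) (Tm A mu f)"
    by (simp only: opv_mult opv_lin1 Suc.IH)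
  then show ?case by (simp only: funpow_Suc_right o_apply)
qed

lemma Tm_sym:
  assumes sym: "\<forall>u w. A u w = A w u"
  shows "inn (Tm A mu f) g = inn f (Tm A mu g)"
proof -
  have "inn (mv A f) g = (\<Sum>u\<in>UNIV. \<Sum>w\<in>UNIV. A u w * f w * g u)"
    by (simp add: inn_def mv_def sum_distrib_right)
  also have "\<dots> = (\<Sum>w\<in>UNIV. \<Sum>u\<in>UNIV. A u w * f w * g u)"
    by (rule sum.swap)
  also have "\<dots> = inn f (mv A g)"
    unfolding inn_def mv_def sum_distrib_left
    by (intro sum.cong refl) (simp add: sym[rule_format, of _ "w" for w] mult_ac)
  moreover have "inn (Tm A mu f) g = inn (mv A f) g - mu * inn f g"
    unfolding inn_def Tm_def by (simp add: left_diff_distrib sum_subtractf sum_distrib_left mult.assoc)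
  moreover have "inn f (Tm A mu g) = inn f (mv A g) - mu * inn f g"
    unfolding inn_def Tm_def by (simp add: right_diff_distrib sum_subtractf sum_distrib_left algebra_simps)
  ultimately show ?thesis by simp
qed

lemma inn_self_zero: "inn f f = 0 \<Longrightarrow> f = (\<lambda>_. 0)"
proof -
  assume "inn f f = 0"
  then have "(\<Sum>u\<in>UNIV. f u * f u) = 0" unfolding inn_def .
  moreover have "\<forall>u\<in>UNIV. 0 \<le> f u * f u" by simp
  ultimately have "\<forall>u\<in>UNIV. f u * f u = 0"
    using sum_nonneg_eq_0_iff[of UNIV "\<lambda>u. f u * f u"] by simp
  then show ?thesis by auto
qed

lemma kill:
  assumes sym: "\<forall>u w. A u w = A w u"
  shows "r \<ge> 1 \<Longrightarrow> (Tm A mu ^^ r) h = (\<lambda>_. 0) \<Longrightarrow> Tm A mu h = (\<lambda>_. 0)"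
proof (induction r arbitrary: h)
  case 0
  then show ?case by simp
next
  case (Suc r)
  show ?case
  proof (cases "r = 0")
    case True
    then show ?thesis using Suc.prems(2) by simp
  next
    case False
    have "(Tm A mu ^^ r) (Tm A mu h) = (\<lambda>_. 0)"
      using Suc.prems(2) by (simp only: funpow_Suc_right o_apply)
    moreover have "1 \<le> r" using False by simp
    ultimately have TT: "Tm A mu (Tm A mu h) = (\<lambda>_. 0)" using Suc.IH by blast
    have "inn (Tm A mu h) (Tm A mu h) = inn h (Tm A mu (Tm A mu h))"
      by (rule Tm_sym[OF sym])
    also have "\<dots> = 0" unfolding TT inn_def by simp
    finally show ?thesis by (rule inn_self_zero)
  qed
qed

lemma Tm_lin: "Tm A mu (\<lambda>u. a * f u + b * g u) u = a * Tm A mu f u + b * Tm A mu g u"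
  by (simp add: Tm_def mv_def algebra_simps sum.distrib sum_distrib_left)

lemma eig_iff: "f \<in> eigenspace A mu \<longleftrightarrow> Tm A mu f = (\<lambda>_. 0)"
  by (auto simp: eigenspace_def Tm_def fun_eq_iff mv_def)

lemma proj_poly:
  fixes A :: "'v::finite \<Rightarrow> 'v \<Rightarrow> real"
  assumes sym: "\<forall>u w. A u w = A w u"
    and P: "orth_proj_mat P (eigenspace A mu)"
  shows "\<exists>g c. \<forall>u w. P u w = opv A g (ev w) u / c"
proof -
  obtain m where m: "m \<noteq> 0" "\<forall>f u. opv A m f u = 0" using annihilating[of A] by blast
  define r where "r = order mu m"
  obtain g where g: "m = [:-mu, 1:] ^ r * g" "\<not> [:-mu, 1:] dvd g"
    using order_decomp[OF m(1), of mu] unfolding r_def by blast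
  define c where "c = poly g mu"
  have c: "c \<noteq> 0" using g(2) by (simp add: c_def poly_eq_0_iff_dvd)
  have claim1: "Tm A mu (opv A g f) = (\<lambda>_. 0)" for f
  proof (cases "r = 0")
    case True
    then have "opv A g f = (\<lambda>_. 0)" using g(1) m(2) by (auto simp: fun_eq_iff)
    then show ?thesis by (simp add: Tm_def mv_def fun_eq_iff)
  next
    case False
    have "(Tm A mu ^^ r) (opv A g f) = (\<lambda>_. 0)"
      using m(2) g(1) by (simp add: opv_pow[symmetric] opv_mult[symmetric] fun_eq_iff)
    then show ?thesis using kill[OF sym, of r] False by simp
  qed
  define s where "s = synthetic_div g mu"
  have gs: "g = [:-mu, 1:] * s + [:c:]"
    unfolding s_def c_def by (rule synthetic_div_correct'[symmetric])
  have gexp: "opv A g f u = Tm A mu (opv A s f) u + c * f u" for f u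
    by (subst gs, simp only: opv_add opv_mult opv_lin1 opv_const)
  define Q where "Q f = (\<lambda>u. opv A g f u / c)" for f
  have QW: "Q f \<in> eigenspace A mu" for f
  proof -
    have "Tm A mu (Q f) u = (1/c) * Tm A mu (opv A g f) u + 0 * Tm A mu f u" for u
      using Tm_lin[of A mu "1/c" "opv A g f" 0 f u] by (simp add: Q_def)
    then show ?thesis using claim1 by (simp add: eig_iff fun_eq_iff)
  qed
  have Qperp: "inn (\<lambda>u. f u - Q f u) w = 0" if "w \<in> eigenspace A mu" for f w
  proof -
    have "(\<lambda>u. f u - Q f u) = (\<lambda>u. (-1/c) * Tm A mu (opv A s f) u)"
      using c by (simp add: Q_def gexp fun_eq_iff field_simps)
    then have "inn (\<lambda>u. f u - Q f u) w = (-1/c) * inn (Tm A mu (opv A s f)) w"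
      by (simp add: inn_def sum_distrib_left mult.assoc)
    also have "\<dots> = 0" using Tm_sym[OF sym] that by (simp add: eig_iff inn_def)
    finally show ?thesis .
  qed
  have "P u w = Q (ev w) u" for u w
  proof -
    define f where "f = ev w"
    define Pf where "Pf = (\<lambda>u. \<Sum>w\<in>UNIV. P u w * f w)"
    have Pfw: "Pf u = P u w" for u
    proof -
      have "Pf u = (\<Sum>w'\<in>UNIV. if w' = w then P u w else 0)"
        unfolding Pf_def f_def by (rule sum.cong) (auto simp: ev_def)
      then show ?thesis by simp
    qed
    have PW: "Pf \<in> eigenspace A mu" and Pperp: "\<forall>g\<in>eigenspace A mu. inn (\<lambda>u. f u - Pf u) g = 0"
      using P unfolding orth_proj_mat_def Pf_def inn_def by auto
    define d where "d = (\<lambda>u. 1 * Q f u + (-1) * Pf u)"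
    have "Tm A mu d u = 1 * Tm A mu (Q f) u + (-1) * Tm A mu Pf u" for u
      unfolding d_def by (rule Tm_lin)
    then have dW: "d \<in> eigenspace A mu"
      using QW[of f] PW by (simp add: eig_iff fun_eq_iff)
    have "inn d d = inn (\<lambda>u. f u - Pf u) d - inn (\<lambda>u. f u - Q f u) d"
      unfolding inn_def d_def by (subst sum_subtractf[symmetric], rule sum.cong, simp, simp add: algebra_simps)
    also have "\<dots> = 0" using Pperp dW Qperp[OF dW] by simp
    finally have "d = (\<lambda>_. 0)" by (rule inn_self_zero)
    then have "Q f u = Pf u" by (simp add: d_def fun_eq_iff)
    then show ?thesis by (simp add: Pfw f_def)
  qed
  then show ?thesis by (auto simp: Q_def)
qed



lemma relpow_sym:
  assumes "\<forall>u v. E u v \<longleftrightarrow> E v u"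
  shows "(E ^^ n) x y = (E ^^ n) y x"
proof (induction n arbitrary: x y)
  case 0
  then show ?case by auto
next
  case (Suc n)
  have "(E ^^ Suc n) x y = (\<exists>z. (E ^^ n) x z \<and> E z y)" by auto
  also have "\<dots> = (\<exists>z. E y z \<and> (E ^^ n) z x)" using Suc.IH assms by blast
  also have "\<dots> = (E ^^ Suc n) y x" by (simp only: relpowp_Suc_left) auto
  finally show ?case .
qed

lemma ddist_I: "reach R x y \<Longrightarrow> (R ^^ ddist R x y) x y"
  unfolding reach_def ddist_def by (auto intro: LeastI)

lemma ddist_le: "(R ^^ n) x y \<Longrightarrow> ddist R x y \<le> n"
  unfolding ddist_def by (rule Least_le)

lemma ddist_self[simp]: "ddist R x x = 0"
  unfolding ddist_def by (rule Least_eq_0) simp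

lemma ddist_sym: "simple_graph E \<Longrightarrow> ddist E u w = ddist E w u"
  unfolding ddist_def simple_graph_def using relpow_sym[of E] by presburger

lemma ddist0: "connected_graph E \<Longrightarrow> ddist E u w = 0 \<longleftrightarrow> u = w"
proof
  assume c: "connected_graph E" and "ddist E u w = 0"
  then show "u = w" using ddist_I[of E u w] by (auto simp: connected_graph_def)
next
  assume "u = w"
  then show "ddist E u w = 0" using ddist_le[where R=E and n=0 and x=u and y=w] by simp
qed

lemma ddist1: "simple_graph E \<Longrightarrow> connected_graph E \<Longrightarrow> ddist E u w = 1 \<longleftrightarrow> E u w"
proof
  assume s: "simple_graph E" and c: "connected_graph E" and "ddist E u w = 1"
  then show "E u w" using ddist_I[of E u w] by (auto simp: connected_graph_def)
next
  assume s: "simple_graph E" and c: "connected_graph E" and e: "E u w"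
  then have "u \<noteq> w" by (auto simp: simple_graph_def)
  then have "ddist E u w \<noteq> 0" using ddist0[OF c] by simp
  moreover have "(E ^^ 1) u w" using e by auto
  then have "ddist E u w \<le> 1" by (rule ddist_le)
  ultimately show "ddist E u w = 1" by simp
qed

lemma Mclosed:
  fixes E :: "'v::finite \<Rightarrow> 'v \<Rightarrow> bool"
  assumes s: "simple_graph E" and c: "connected_graph E" and dr: "distance_regular E"
  shows "\<exists>\<phi>. \<forall>u w. opv (adj_mat E) g (ev w) u = \<phi> (ddist E u w)"
proof -
  obtain p where p: "\<And>u v i j. card {w. ddist E u w = i \<and> ddist E v w = j} = p i j (ddist E u v)"
    using dr unfolding distance_regular_def by blast
  define N where "N = Max (range (\<lambda>(u,w). ddist E u w))"
  have leN: "ddist E u w \<le> N" for u w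
    unfolding N_def by (rule Max_ge) auto
  have step: "\<exists>\<psi>. \<forall>u w. mv (adj_mat E) (\<lambda>z. \<phi> (ddist E z w)) u = \<psi> (ddist E u w)" for \<phi>
  proof (intro exI allI)
    fix u w
    have "mv (adj_mat E) (\<lambda>z. \<phi> (ddist E z w)) u
        = (\<Sum>z\<in>UNIV. if ddist E u z = 1 then \<phi> (ddist E w z) else 0)"
      unfolding mv_def adj_mat_def
      by (rule sum.cong) (simp_all add: ddist1[OF s c, symmetric] ddist_sym[OF s, of _ w])
    also have "\<dots> = (\<Sum>j\<le>N. \<Sum>z\<in>{z\<in>UNIV. ddist E w z = j}. if ddist E u z = 1 then \<phi> (ddist E w z) else 0)"
      by (rule sum.group[symmetric]) (auto simp: leN)
    also have "\<dots> = (\<Sum>j\<le>N. \<phi> j * real (p 1 j (ddist E u w)))"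
    proof (rule sum.cong[OF refl])
      fix j
      have "(\<Sum>z\<in>{z\<in>UNIV. ddist E w z = j}. if ddist E u z = 1 then \<phi> (ddist E w z) else 0)
          = (\<Sum>z\<in>{z. ddist E u z = 1 \<and> ddist E w z = j}. \<phi> j)"
        by (rule sum.mono_neutral_cong_right) auto
      also have "\<dots> = \<phi> j * real (p 1 j (ddist E u w))"
        by (simp add: p)
      finally show "(\<Sum>z\<in>{z\<in>UNIV. ddist E w z = j}. if ddist E u z = 1 then \<phi> (ddist E w z) else 0)
          = \<phi> j * real (p 1 j (ddist E u w))" .
    qed
    finally show "mv (adj_mat E) (\<lambda>z. \<phi> (ddist E z w)) u = (\<lambda>d. \<Sum>j\<le>N. \<phi> j * real (p 1 j d)) (ddist E u w)"
      by simp
  qed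
  show ?thesis
  proof (induction g rule: pCons_induct)
    case 0
    then show ?case by (intro exI[of _ "\<lambda>_. 0"]) simp
  next
    case (pCons a q)
    then obtain \<phi> where \<phi>: "\<forall>u w. opv (adj_mat E) q (ev w) u = \<phi> (ddist E u w)" by blast
    have eq: "opv (adj_mat E) q (ev w) = (\<lambda>z. \<phi> (ddist E z w))" for w
      using \<phi> by auto
    obtain \<psi> where \<psi>: "\<forall>u w. mv (adj_mat E) (\<lambda>z. \<phi> (ddist E z w)) u = \<psi> (ddist E u w)"
      using step by blast
    show ?case
    proof (intro exI allI)
      fix u w
      show "opv (adj_mat E) (pCons a q) (ev w) u = (\<lambda>d. a * (if d = 0 then 1 else 0) + \<psi> d) (ddist E u w)"
        using \<psi> by (simp add: opv_pCons eq) (simp add: ev_def ddist0[OF c])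
    qed
  qed
qed

lemma relpow_LD:
  "(LD E ^^ Suc n) x y \<longleftrightarrow> x \<in> arcs E \<and> y \<in> arcs E \<and> (E ^^ n) (snd x) (fst y)"
proof (induction n arbitrary: y)
  case 0
  then show ?case by (auto simp: LD_def)
next
  case (Suc n)
  have "(LD E ^^ Suc (Suc n)) x y = (\<exists>z. (LD E ^^ Suc n) x z \<and> LD E z y)" by auto
  also have "\<dots> = (x \<in> arcs E \<and> y \<in> arcs E \<and> (\<exists>v. (E ^^ n) (snd x) v \<and> E v (fst y)))"
  proof
    assume "\<exists>z. (LD E ^^ Suc n) x z \<and> LD E z y"
    then obtain z where "(LD E ^^ Suc n) x z" "LD E z y" by blast
    moreover have "x \<in> arcs E \<and> z \<in> arcs E \<and> (E ^^ n) (snd x) (fst z)"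
      using Suc.IH[of z] \<open>(LD E ^^ Suc n) x z\<close> by blast
    ultimately have "x \<in> arcs E" "z \<in> arcs E" "(E ^^ n) (snd x) (fst z)" "y \<in> arcs E" "snd z = fst y"
      unfolding LD_def by blast+
    then show "x \<in> arcs E \<and> y \<in> arcs E \<and> (\<exists>v. (E ^^ n) (snd x) v \<and> E v (fst y))"
      by (auto simp: arcs_def intro!: exI[of _ "fst z"] split: prod.splits)
  next
    assume "x \<in> arcs E \<and> y \<in> arcs E \<and> (\<exists>v. (E ^^ n) (snd x) v \<and> E v (fst y))"
    then obtain v where "x \<in> arcs E" "y \<in> arcs E" "(E ^^ n) (snd x) v" "E v (fst y)" by blast
    moreover have va: "(v, fst y) \<in> arcs E" using \<open>E v (fst y)\<close> by (simp add: arcs_def)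
    ultimately have "(LD E ^^ Suc n) x (v, fst y)"
      using Suc.IH[of "(v, fst y)", unfolded fst_conv] by blast
    moreover have "LD E (v, fst y) y" using va \<open>y \<in> arcs E\<close> by (simp add: LD_def)
    ultimately show "\<exists>z. (LD E ^^ Suc n) x z \<and> LD E z y" by blast
  qed
  also have "\<dots> = (x \<in> arcs E \<and> y \<in> arcs E \<and> (E ^^ Suc n) (snd x) (fst y))" by auto
  finally show ?case .
qed

lemma dist_digraph_LD:
  assumes c: "connected_graph E" and x: "x \<in> arcs E" and y: "y \<in> arcs E" and i: "i \<ge> 1"
  shows "dist_digraph (LD E) i x y \<longleftrightarrow> x \<noteq> y \<and> Suc (ddist E (snd x) (fst y)) = i"
proof -
  have r: "reach E (snd x) (fst y)" using c by (simp add: connected_graph_def)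
  then obtain n where n: "(E ^^ n) (snd x) (fst y)" by (auto simp: reach_def)
  then have "(LD E ^^ Suc n) x y" using relpow_LD[where E=E and n=n and x=x and y=y] x y by blast
  then have reachLD: "reach (LD E) x y" unfolding reach_def by blast
  show ?thesis
  proof (cases "x = y")
    case True
    then have "ddist (LD E) x y = 0" using ddist_le[where R="LD E" and n=0 and x=x and y=y] by simp
    then show ?thesis using True i by (simp add: dist_digraph_def)
  next
    case False
    have "ddist (LD E) x y = Suc (LEAST m. (LD E ^^ Suc m) x y)"
      unfolding ddist_def
      by (rule Least_Suc[where P="\<lambda>m. (LD E ^^ m) x y", OF \<open>(LD E ^^ Suc n) x y\<close>]) (use False in simp)
    also have "(LEAST m. (LD E ^^ Suc m) x y) = ddist E (snd x) (fst y)"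
      unfolding ddist_def using x y relpow_LD[where E=E and x=x and y=y] by presburger
    finally show ?thesis using False reachLD by (auto simp: dist_digraph_def)
  qed
qed



lemma delta_l: "(\<Sum>j\<in>(UNIV::'a::finite set). (if j = a then 1 else 0) * (f j::real)) = f a"
proof -
  have "(\<Sum>j\<in>(UNIV::'a set). (if j = a then 1 else 0) * f j) = (\<Sum>j\<in>UNIV. if a = j then f j else 0)"
    by (rule sum.cong) auto
  then show ?thesis by simp
qed

lemma delta_r: "(\<Sum>j\<in>(UNIV::'a::finite set). (f j::real) * (if j = a then 1 else 0)) = f a"
proof -
  have "(\<Sum>j\<in>(UNIV::'a set). f j * (if j = a then 1 else 0)) = (\<Sum>j\<in>UNIV. if a = j then f j else 0)"
    by (rule sum.cong) auto
  then show ?thesis by simp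
qed

lemma slam_eval: "S_lam P x y = P (fst x) (snd y) - P (snd x) (fst y)"
proof -
  have 1: "mmult UNIV (mmult UNIV (mtrans Dt) P) Dh x y = P (fst x) (snd y)"
  proof -
    have "mmult UNIV (mtrans Dt) P x k = P (fst x) k" for k
      unfolding mmult_def mtrans_def Dt_def by (rule delta_l)
    then show ?thesis unfolding mmult_def Dh_def by (simp add: delta_r)
  qed
  have 2: "mmult UNIV (mmult UNIV (mtrans Dh) P) Dt x y = P (snd x) (fst y)"
  proof -
    have "mmult UNIV (mtrans Dh) P x k = P (snd x) k" for k
      unfolding mmult_def mtrans_def Dh_def by (rule delta_l)
    then show ?thesis unfolding mmult_def Dt_def by (simp add: delta_r)
  qed
  show ?thesis unfolding S_lam_def 1 2 ..
qed

theorem lemma5p3: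
  fixes E :: "'v::finite \<Rightarrow> 'v \<Rightarrow> bool" and k d :: nat and mu :: real
    and P :: "'v \<Rightarrow> 'v \<Rightarrow> real"
  assumes "simple_graph E" and "connected_graph E" and "distance_regular E"
    and "regular_graph E k" and "diameter E = d"
    and "is_eigenvalue (adj_mat E) mu" and "mu \<noteq> real k" and "mu \<noteq> - real k"
    and "orth_proj_mat P (eigenspace (adj_mat E) mu)"
  shows "\<exists>c :: nat \<Rightarrow> real. \<forall>x\<in>arcs E. \<forall>y\<in>arcs E.
           S_lam P x y = (\<Sum>i=1..d. c i * skew_adj (dist_digraph (LD E) i) x y)"
proof -
  note s = assms(1) and cn = assms(2) and dr = assms(3)
  have sym: "\<forall>u w. adj_mat E u w = adj_mat E w u"
    using s by (simp add: adj_mat_def simple_graph_def)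
  obtain g c0 where gc: "\<forall>u w. P u w = opv (adj_mat E) g (ev w) u / c0"
    using proj_poly[OF sym assms(9)] by blast
  obtain \<phi> where \<phi>: "\<forall>u w. opv (adj_mat E) g (ev w) u = \<phi> (ddist E u w)"
    using Mclosed[OF s cn dr] by blast
  define \<psi> where "\<psi> j = \<phi> j / c0" for j
  have Pd: "P u w = \<psi> (ddist E u w)" for u w using gc \<phi> by (simp add: \<psi>_def)
  have led: "ddist E u w \<le> d" for u w
  proof -
    have "{ddist E u v |u v. True} = range (\<lambda>(u,v). ddist E u v)" by auto
    then have "finite {ddist E u v |u v. True}" by simp
    then show ?thesis using assms(5) unfolding diameter_def by (auto intro: Max_ge)
  qed
  define c where "c i = \<psi> d - \<psi> (i - 1)" for i
  have T: "(\<Sum>i=1..d. c i * (if Suc j = i then 1 else 0)) = \<psi> d - \<psi> j" if "j \<le> d" for j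
  proof -
    have "(\<Sum>i=1..d. c i * (if Suc j = i then 1 else 0)) = (\<Sum>i\<in>{1..d}. if i = Suc j then c i else 0)"
      by (rule sum.cong) auto
    also have "\<dots> = (if Suc j \<in> {1..d} then c (Suc j) else 0)" by (rule sum.delta) simp
    also have "\<dots> = \<psi> d - \<psi> j"
    proof -
      have "j = d \<or> Suc j \<le> d" using that by linarith
      then show ?thesis by (auto simp: c_def)
    qed
    finally show ?thesis .
  qed
  show ?thesis
  proof (intro exI[of _ c] ballI)
    fix x y assume x: "x \<in> arcs E" and y: "y \<in> arcs E"
    have Sv: "S_lam P x y = \<psi> (ddist E (snd y) (fst x)) - \<psi> (ddist E (snd x) (fst y))"
      by (simp add: slam_eval Pd ddist_sym[OF s, of "fst x"])
    show "S_lam P x y = (\<Sum>i=1..d. c i * skew_adj (dist_digraph (LD E) i) x y)"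
    proof (cases "x = y")
      case True
      have "skew_adj (dist_digraph (LD E) i) x y = 0" if "i \<in> {1..d}" for i
        using dist_digraph_LD[OF cn x y, of i] dist_digraph_LD[OF cn y x, of i] that True
        by (simp add: skew_adj_def adj01_def mtrans_def)
      then show ?thesis using Sv True by simp
    next
      case False
      have "skew_adj (dist_digraph (LD E) i) x y =
          (if Suc (ddist E (snd x) (fst y)) = i then 1 else 0) - (if Suc (ddist E (snd y) (fst x)) = i then 1 else 0)"
        if "i \<in> {1..d}" for i
        using dist_digraph_LD[OF cn x y, of i] dist_digraph_LD[OF cn y x, of i] that False
        by (simp add: skew_adj_def adj01_def mtrans_def)
      then have "(\<Sum>i=1..d. c i * skew_adj (dist_digraph (LD E) i) x y)
         = (\<Sum>i=1..d. c i * (if Suc (ddist E (snd x) (fst y)) = i then 1 else 0))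
         - (\<Sum>i=1..d. c i * (if Suc (ddist E (snd y) (fst x)) = i then 1 else 0))"
        by (simp add: right_diff_distrib sum_subtractf)
      also have "\<dots> = (\<psi> d - \<psi> (ddist E (snd x) (fst y))) - (\<psi> d - \<psi> (ddist E (snd y) (fst x)))"
        using T led by simp
      finally show ?thesis using Sv by simp
    qed
  qed
qed

end
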